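(* For every integer $r\ge 7$, ${\rm dim}_s(P_5\diamond P_r)={\rm dim}_s(P_5\diamond C_r)=3r-2$.
   Context: The modular product $G\diamond H$ has vertex set $V(G)\times V(H)$; distinct vertices $(g,h)$ and $(g',h')$ are adjacent iff ($g=g'$ and $hh'\in E(H)$), or ($gg'\in E(G)$ and $h=h'$), or ($gg'\in E(G)$ and $hh'\in E(H)$), or ($g\neq g'$, $h\neq h'$, $gg'\notin E(G)$ and $hh'\notin E(H)$). $P_n$ and $C_n$ are the path and cycle on $n$ vertices. ${\rm dim}_s(X)$ is the strong metric dimension: the minimum size of $S\subseteq V(X)$ such that for all distinct $x,y$ some $z\in S$ has $d_X(y,z)=d_X(y,x)+d_X(x,z)$ or $d_X(x,z)=d_X(x,y)+d_X(y,z)$. *)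

theory Defs
  imports Main
begin

(* A finite simple graph is given by a vertex set V and a symmetric irreflexive
   adjacency relation E (only its restriction to V matters). *)

definition path_V :: "nat \<Rightarrow> nat set" where
  "path_V n = {0..<n}"

definition path_E :: "nat \<Rightarrow> nat \<Rightarrow> bool" where
  "path_E i j \<longleftrightarrow> (i + 1 = j \<or> j + 1 = i)"

definition cycle_V :: "nat \<Rightarrow> nat set" where
  "cycle_V n = {0..<n}"

definition cycle_E :: "nat \<Rightarrow> nat \<Rightarrow> nat \<Rightarrow> bool" where
  "cycle_E n i j \<longleftrightarrow> i \<noteq> j \<and> (j = (i + 1) mod n \<or> i = (j + 1) mod n)"

definition modprod_V :: "'a set \<Rightarrow> 'b set \<Rightarrow> ('a \<times> 'b) set" where
  "modprod_V VG VH = VG \<times> VH"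

definition modprod_E :: "('a \<Rightarrow> 'a \<Rightarrow> bool) \<Rightarrow> ('b \<Rightarrow> 'b \<Rightarrow> bool)
    \<Rightarrow> 'a \<times> 'b \<Rightarrow> 'a \<times> 'b \<Rightarrow> bool" where
  "modprod_E EG EH x y \<longleftrightarrow>
     (case x of (g, h) \<Rightarrow> case y of (g', h') \<Rightarrow>
       (g, h) \<noteq> (g', h') \<and>
       ((g = g' \<and> EH h h') \<or> (EG g g' \<and> h = h') \<or> (EG g g' \<and> EH h h') \<or>
        (g \<noteq> g' \<and> h \<noteq> h' \<and> \<not> EG g g' \<and> \<not> EH h h')))"

definition is_walk :: "'a set \<Rightarrow> ('a \<Rightarrow> 'a \<Rightarrow> bool) \<Rightarrow> 'a list \<Rightarrow> nat \<Rightarrow> 'a \<Rightarrow> 'a \<Rightarrow> bool" where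
  "is_walk V E p n x y \<longleftrightarrow> length p = Suc n \<and> hd p = x \<and> last p = y \<and> set p \<subseteq> V \<and>
     (\<forall>i<n. E (p ! i) (p ! Suc i))"

(* shortest-path distance (used only on connected graphs) *)
definition gdist :: "'a set \<Rightarrow> ('a \<Rightarrow> 'a \<Rightarrow> bool) \<Rightarrow> 'a \<Rightarrow> 'a \<Rightarrow> nat" where
  "gdist V E x y = (LEAST n. \<exists>p. is_walk V E p n x y)"

definition strong_resolving :: "'a set \<Rightarrow> ('a \<Rightarrow> 'a \<Rightarrow> bool) \<Rightarrow> 'a set \<Rightarrow> bool" where
  "strong_resolving V E S \<longleftrightarrow> S \<subseteq> V \<and>
     (\<forall>x\<in>V. \<forall>y\<in>V. x \<noteq> y \<longrightarrow>
        (\<exists>z\<in>S. gdist V E y z = gdist V E y x + gdist V E x z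
               \<or> gdist V E x z = gdist V E x y + gdist V E y z))"

definition sdim :: "'a set \<Rightarrow> ('a \<Rightarrow> 'a \<Rightarrow> bool) \<Rightarrow> nat" where
  "sdim V E = (LEAST k. \<exists>S. strong_resolving V E S \<and> card S = k)"

end

theory Submission imports Defs begin

lemma less5: "(g::nat) < 5 \<Longrightarrow> g = 0 \<or> g = 1 \<or> g = 2 \<or> g = 3 \<or> g = 4" by auto

locale HG =
  fixes r :: nat and EH :: "nat \<Rightarrow> nat \<Rightarrow> bool"
  assumes r7: "r \<ge> 7"
  and sym: "\<And>a b. EH a b \<Longrightarrow> EH b a"
  and irr: "\<And>a. \<not> EH a a"
  and tri: "\<And>a b c. a < r \<Longrightarrow> b < r \<Longrightarrow> c < r \<Longrightarrow> EH a b \<Longrightarrow> EH b c \<Longrightarrow> EH a c \<Longrightarrow> False"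
  and avoid: "\<And>h h'. h < r \<Longrightarrow> h' < r \<Longrightarrow> \<exists>c<r. c \<noteq> h \<and> c \<noteq> h' \<and> \<not> EH h c \<and> \<not> EH h' c"
  and nbr: "\<And>h. h < r \<Longrightarrow> \<exists>a<r. EH h a"
  and second: "\<And>h h'. h < r \<Longrightarrow> h' < r \<Longrightarrow> EH h h' \<Longrightarrow> (\<exists>c<r. EH h c \<and> c \<noteq> h') \<or> (\<exists>c<r. EH h' c \<and> c \<noteq> h)"
  and e01: "EH 0 1" and e12: "EH 1 2" and n02: "\<not> EH 0 2"
begin

abbreviation "V \<equiv> modprod_V (path_V 5) {0..<r}"
abbreviation "E \<equiv> modprod_E path_E EH"

lemma symiff: "EH a b = EH b a" using sym by blast

lemma E_simp: "E (g,h) (g',h') \<longleftrightarrow> (g,h)\<noteq>(g',h') \<and>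
   ((g=g' \<and> EH h h') \<or> ((g+1=g' \<or> g'+1=g) \<and> h=h') \<or> ((g+1=g' \<or> g'+1=g) \<and> EH h h') \<or>
    (g\<noteq>g' \<and> h\<noteq>h' \<and> \<not>(g+1=g' \<or> g'+1=g) \<and> \<not> EH h h'))"
  by (simp add: modprod_E_def path_E_def)

lemma inV: "(x \<in> V) \<longleftrightarrow> fst x < 5 \<and> snd x < r"
  by (cases x) (auto simp: modprod_V_def path_V_def)

definition anti :: "nat \<times> nat \<Rightarrow> nat \<times> nat \<Rightarrow> bool" where
  "anti x y \<longleftrightarrow> snd x = snd y \<and> (fst x + 3 = fst y \<or> fst y + 3 = fst x)"

definition \<delta> :: "nat \<times> nat \<Rightarrow> nat \<times> nat \<Rightarrow> nat" where
  "\<delta> x y = (if x = y then 0 else if E x y then 1 else if anti x y then 3 else 2)"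

lemma E_sym: "E x y \<Longrightarrow> E y x"
  by (cases x; cases y) (auto simp: E_simp symiff)

lemma E_eq: "E (a,h) (b,h) \<longleftrightarrow> a \<noteq> b \<and> (a+1=b \<or> b+1=a)"
  using irr[of h] by (auto simp: E_simp)
lemma E_adj: "EH h k \<Longrightarrow> E (a,h) (b,k) \<longleftrightarrow> (a = b \<or> a+1=b \<or> b+1=a)"
  using irr[of h] by (auto simp: E_simp)
lemma E_adj': "EH k h \<Longrightarrow> E (a,h) (b,k) \<longleftrightarrow> (a = b \<or> a+1=b \<or> b+1=a)"
  using E_adj sym by blast
lemma E_non: "k \<noteq> h \<Longrightarrow> \<not> EH h k \<Longrightarrow> E (a,h) (b,k) \<longleftrightarrow> (a \<noteq> b \<and> a+1\<noteq>b \<and> b+1\<noteq>a)"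
  by (auto simp: E_simp)
lemma E_non': "k \<noteq> h \<Longrightarrow> \<not> EH k h \<Longrightarrow> E (a,h) (b,k) \<longleftrightarrow> (a \<noteq> b \<and> a+1\<noteq>b \<and> b+1\<noteq>a)"
  using E_non sym by blast

lemma no_common: "anti (g,h) (g',h') \<Longrightarrow> E (g,h) (d,k) \<Longrightarrow> E (d,k) (g',h') \<Longrightarrow> g < 5 \<Longrightarrow> g' < 5 \<Longrightarrow> d < 5 \<Longrightarrow> False"
proof -
  assume a: "anti (g,h) (g',h')" and e1: "E (g,h) (d,k)" and e2: "E (d,k) (g',h')" and "g < 5" "g' < 5" "d < 5"
  from a have hh: "h' = h" and gg: "g + 3 = g' \<or> g' + 3 = g" by (auto simp: anti_def)
  show False
  proof (cases "k = h")
    case True thus ?thesis using e1 e2 hh gg by (simp add: E_eq; arith)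
  next
    case False
    show ?thesis
    proof (cases "EH h k")
      case True thus ?thesis using e1 e2 hh gg E_adj[OF True] E_adj'[OF True] by (simp; arith)
    next
      case n: False
      have n': "\<not> EH k h" using n sym by blast
      show ?thesis using e1 e2 hh gg E_non[OF False n] E_non[of h k] n' False \<open>g<5\<close> \<open>g'<5\<close> \<open>d<5\<close>
        by (simp; arith)
    qed
  qed
qed


lemma E_irr: "\<not> E x x" by (cases x) (simp add: E_simp)

lemma delta_le3: "\<delta> x y \<le> 3" by (simp add: \<delta>_def)
lemma delta_0: "\<delta> x y = 0 \<longleftrightarrow> x = y" by (simp add: \<delta>_def)

lemma lip: "x \<in> V \<Longrightarrow> b \<in> V \<Longrightarrow> c \<in> V \<Longrightarrow> E x b \<Longrightarrow> \<delta> x c \<le> Suc (\<delta> b c)"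
proof -
  assume xV: "x \<in> V" and bV: "b \<in> V" and cV: "c \<in> V" and e: "E x b"
  show ?thesis
  proof (cases "b = c")
    case True thus ?thesis using e E_irr[of x] by (auto simp: \<delta>_def)
  next
    case bc: False
    show ?thesis
    proof (cases "E b c")
      case True
      have "\<not> anti x c"
      proof
        assume an: "anti x c"
        obtain g h where x: "x = (g,h)" by (cases x)
        obtain g' h' where c: "c = (g',h')" by (cases c)
        obtain d k where b: "b = (d,k)" by (cases b)
        show False using no_common[of g h g' h' d k] an e True xV bV cV x b c by (simp add: inV)
      qed
      thus ?thesis using bc True by (auto simp: \<delta>_def)
    next
      case False
      thus ?thesis using bc by (auto simp: \<delta>_def)
    qed
  qed
qed

lemma walk_lower: "is_walk V E p n x y \<Longrightarrow> \<delta> x y \<le> n"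
proof (induction n arbitrary: p x)
  case 0
  then obtain a where "p = [a]" by (cases p) (auto simp: is_walk_def)
  thus ?case using 0 by (auto simp: is_walk_def \<delta>_def)
next
  case (Suc n)
  then obtain a p' where p: "p = a # p'" by (cases p) (auto simp: is_walk_def)
  have lp: "length p' = Suc n" using Suc.prems p by (simp add: is_walk_def)
  hence ne: "p' \<noteq> []" by auto
  have ax: "a = x" using Suc.prems p by (simp add: is_walk_def)
  have w': "is_walk V E p' n (hd p') y"
    unfolding is_walk_def
  proof (intro conjI allI impI)
    show "length p' = Suc n" by (rule lp)
    show "hd p' = hd p'" ..
    show "last p' = y" using Suc.prems p ne by (simp add: is_walk_def)
    show "set p' \<subseteq> V" using Suc.prems p by (simp add: is_walk_def)
    fix i assume "i < n"
    hence "Suc i < Suc n" by simp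
    thus "E (p' ! i) (p' ! Suc i)" using Suc.prems p by (auto simp: is_walk_def)
  qed
  have e: "E x (hd p')" using Suc.prems p ne ax by (auto simp: is_walk_def hd_conv_nth)
  have xV: "x \<in> V" using Suc.prems p ax by (simp add: is_walk_def)
  have hV: "hd p' \<in> V" using Suc.prems p ne by (auto simp: is_walk_def)
  have yV: "y \<in> V" using Suc.prems p ne by (auto simp: is_walk_def)
  have "\<delta> x y \<le> Suc (\<delta> (hd p') y)" by (rule lip[OF xV hV yV e])
  also have "\<delta> (hd p') y \<le> n" by (rule Suc.IH[OF w'])
  finally show ?case by simp
qed

lemma walk1: "x \<in> V \<Longrightarrow> is_walk V E [x] 0 x x" by (simp add: is_walk_def)
lemma walk2: "x \<in> V \<Longrightarrow> y \<in> V \<Longrightarrow> E x y \<Longrightarrow> is_walk V E [x,y] 1 x y"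
  by (simp add: is_walk_def)
lemma walk3: "x \<in> V \<Longrightarrow> w \<in> V \<Longrightarrow> y \<in> V \<Longrightarrow> E x w \<Longrightarrow> E w y \<Longrightarrow> is_walk V E [x,w,y] 2 x y"
  by (auto simp: is_walk_def less_Suc_eq numeral_eq_Suc)
lemma walk4: "x \<in> V \<Longrightarrow> w \<in> V \<Longrightarrow> u \<in> V \<Longrightarrow> y \<in> V \<Longrightarrow> E x w \<Longrightarrow> E w u \<Longrightarrow> E u y \<Longrightarrow> is_walk V E [x,w,u,y] 3 x y"
  by (auto simp: is_walk_def less_Suc_eq numeral_eq_Suc)


lemma common:
  assumes xy: "(g,h) \<noteq> (g',k)" and ne: "\<not> E (g,h) (g',k)" and na: "\<not> anti (g,h) (g',k)"
    and g: "g < 5" and g': "g' < 5" and h: "h < r" and k: "k < r"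
  shows "\<exists>w\<in>V. E (g,h) w \<and> E w (g',k)"
proof (cases "k = h")
  case True
  have gg: "g \<noteq> g' \<and> g+1 \<noteq> g' \<and> g'+1 \<noteq> g" using True xy ne by (simp add: E_eq)
  have gg2: "g + 3 \<noteq> g' \<and> g' + 3 \<noteq> g" using True na by (simp add: anti_def)
  show ?thesis
  proof (cases "(g = 1 \<and> g' = 3) \<or> (g = 3 \<and> g' = 1)")
    case True
    thus ?thesis using \<open>k = h\<close> h by (intro bexI[of _ "(2,h)"]) (auto simp: inV E_eq)
  next
    case g13: False
    obtain c where c: "c < r" "c \<noteq> h" "\<not> EH h c" using avoid[OF h h] by auto
    have c': "\<not> EH c h" using c sym by blast
    define d where "d = 6 - g - g'"
    have dp: "d < 5 \<and> d \<noteq> g \<and> d+1 \<noteq> g \<and> g + 1 \<noteq> d \<and> d \<noteq> g' \<and> d+1 \<noteq> g' \<and> g' + 1 \<noteq> d"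
      using less5[OF g] less5[OF g'] gg gg2 g13 unfolding d_def by (elim disjE; simp)
    have w1: "E (g,h) (d,c)" using E_non[of c h, OF c(2) c(3)] dp by simp
    have w2: "E (d,c) (g',k)" using E_non[of h c, OF _ c'] c(2) dp True by simp
    show ?thesis using w1 w2 dp c by (intro bexI[of _ "(d,c)"]) (simp_all add: inV)
  qed
next
  case kh: False
  show ?thesis
  proof (cases "EH h k")
    case True
    have kh': "EH k h" using True sym by blast
    have gg: "g \<noteq> g' \<and> g+1 \<noteq> g' \<and> g'+1 \<noteq> g" using ne by (simp add: E_adj[OF True])
    from second[OF h k True] show ?thesis
    proof
      assume "\<exists>c<r. EH h c \<and> c \<noteq> k"
      then obtain c where c: "c < r" "EH h c" "c \<noteq> k" by auto
      have nck: "\<not> EH c k" using tri[OF h c(1) k] c(2) True by blast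
      have w1: "E (g,h) (g,c)" using E_adj[of h c, OF c(2)] by simp
      have w2: "E (g,c) (g',k)" using E_non[of k c, OF _ nck] c(3) gg by simp
      show ?thesis using w1 w2 g c by (intro bexI[of _ "(g,c)"]) (simp_all add: inV)
    next
      assume "\<exists>c<r. EH k c \<and> c \<noteq> h"
      then obtain c where c: "c < r" "EH k c" "c \<noteq> h" by auto
      have nhc: "\<not> EH h c" using tri[OF h k c(1)] c(2) True by blast
      have w1: "E (g,h) (g',c)" using E_non[of c h, OF c(3) nhc] gg by simp
      have w2: "E (g',c) (g',k)" using E_adj'[of k c, OF c(2)] by simp
      show ?thesis using w1 w2 g' c by (intro bexI[of _ "(g',c)"]) (simp_all add: inV)
    qed
  next
    case nhk: False
    obtain c where c: "c < r" "c \<noteq> h" "c \<noteq> k" "\<not> EH h c" "\<not> EH k c" using avoid[OF h k] by auto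
    have c': "\<not> EH c h" "\<not> EH c k" using c sym by blast+
    have gg: "g = g' \<or> g+1 = g' \<or> g'+1 = g" using ne E_non[of k h, OF kh nhk] by auto
    define d where "d = (if max g g' \<le> 2 then 4 else (0::nat))"
    have dp: "d < 5 \<and> d \<noteq> g \<and> d+1 \<noteq> g \<and> g + 1 \<noteq> d \<and> d \<noteq> g' \<and> d+1 \<noteq> g' \<and> g' + 1 \<noteq> d"
      using less5[OF g] less5[OF g'] gg unfolding d_def by (elim disjE; simp)
    have w1: "E (g,h) (d,c)" using E_non[of c h, OF c(2) c(4)] dp by simp
    have w2: "E (d,c) (g',k)" using E_non[of k c, OF _ c'(2)] c(3) dp by simp
    show ?thesis using w1 w2 dp c by (intro bexI[of _ "(d,c)"]) (simp_all add: inV)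
  qed
qed

lemma walk_upper: "x \<in> V \<Longrightarrow> y \<in> V \<Longrightarrow> \<exists>p. is_walk V E p (\<delta> x y) x y"
proof -
  assume xV: "x \<in> V" and yV: "y \<in> V"
  obtain g h where x: "x = (g,h)" by (cases x)
  obtain g' k where y: "y = (g',k)" by (cases y)
  have g: "g < 5" and h: "h < r" using xV x by (auto simp: inV)
  have g': "g' < 5" and k: "k < r" using yV y by (auto simp: inV)
  show ?thesis
  proof (cases "x = y")
    case True thus ?thesis using walk1[OF xV] by (auto simp: \<delta>_def)
  next
    case xy: False
    show ?thesis
    proof (cases "E x y")
      case True thus ?thesis using walk2[OF xV yV] xy by (auto simp: \<delta>_def)
    next
      case nE: False
      show ?thesis
      proof (cases "anti x y")
        case False
        then obtain w where "w \<in> V" "E x w" "E w y" using common[of g h g' k] xy nE g g' h k x y by auto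
        hence "is_walk V E [x,w,y] 2 x y" using walk3[OF xV _ yV] by blast
        thus ?thesis using xy nE False by (auto simp: \<delta>_def)
      next
        case True
        then have kh: "k = h" and gg: "g + 3 = g' \<or> g' + 3 = g" using x y by (auto simp: anti_def)
        obtain a where a: "a < r" "EH h a" using nbr[OF h] by auto
        have a': "EH a h" using a sym by blast
        have "is_walk V E [(g,h),(g+1,h),(g+2,a),(g+3,h)] 3 (g,h) (g+3,h)" if "g + 3 < 5"
          using that a h E_eq E_adj[of h a, OF a(2)] E_adj[of a h, OF a'] by (intro walk4) (simp_all add: inV)
        moreover have "is_walk V E [(g'+3,h),(g'+2,a),(g'+1,h),(g',h)] 3 (g'+3,h) (g',h)" if "g' + 3 < 5"
          using that a h E_eq E_adj[of h a, OF a(2)] E_adj[of a h, OF a'] by (intro walk4) (simp_all add: inV)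
        ultimately show ?thesis using gg g g' kh x y xy nE True by (auto simp: \<delta>_def)
      qed
    qed
  qed
qed

lemma gdist_eq: "x \<in> V \<Longrightarrow> y \<in> V \<Longrightarrow> gdist V E x y = \<delta> x y"
  unfolding gdist_def
  by (rule Least_equality) (auto intro: walk_upper walk_lower)


lemma K:
  assumes g: "g = 3 \<or> g = 4" and h: "h < r" and y: "(g',k) \<in> V"
  shows "\<delta> (g,h) (g',k) + \<delta> (g',k) (g-3,h) = 3"
proof -
  have g': "g' < 5" using y by (simp add: inV)
  show ?thesis
  proof (cases "k = h")
    case True thus ?thesis using g less5[OF g'] by (elim disjE; simp add: \<delta>_def E_eq anti_def)
  next
    case kh: False
    show ?thesis
    proof (cases "EH h k")
      case True
      show ?thesis using g less5[OF g'] kh E_adj[OF True] E_adj'[of h k, OF True]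
        by (elim disjE; simp add: \<delta>_def anti_def)
    next
      case False
      have n': "\<not> EH k h" using False sym by blast
      show ?thesis using g less5[OF g'] kh E_non[OF kh False] E_non[of h k, OF _ n'] kh
        by (elim disjE; simp add: \<delta>_def anti_def)
    qed
  qed
qed

lemma SR_delta:
  assumes "strong_resolving V E S" "x \<in> V" "y \<in> V" "x \<noteq> y"
  shows "\<exists>z\<in>S. \<delta> y z = \<delta> y x + \<delta> x z \<or> \<delta> x z = \<delta> x y + \<delta> y z"
proof -
  have SV: "S \<subseteq> V" using assms(1) by (simp add: strong_resolving_def)
  obtain z where z: "z \<in> S" "gdist V E y z = gdist V E y x + gdist V E x z
               \<or> gdist V E x z = gdist V E x y + gdist V E y z"
    using assms(1-4) unfolding strong_resolving_def by blast
  have "z \<in> V" using z SV by auto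
  thus ?thesis using z assms gdist_eq by (metis)
qed

lemma F1:
  assumes SR: "strong_resolving V E S" and g: "g = 0 \<or> g = 1" and h: "h < r"
  shows "(g,h) \<in> S \<or> (g+3,h) \<in> S"
proof -
  have xV: "(g,h) \<in> V" "(g+3,h) \<in> V" using g h by (auto simp: inV)
  have d1: "\<delta> (g,h) (g+3,h) = 3" "\<delta> (g+3,h) (g,h) = 3" using g by (auto simp: \<delta>_def E_eq anti_def)
  obtain z where z: "z \<in> S" "\<delta> (g+3,h) z = \<delta> (g+3,h) (g,h) + \<delta> (g,h) z \<or> \<delta> (g,h) z = \<delta> (g,h) (g+3,h) + \<delta> (g+3,h) z"
    using SR_delta[OF SR xV] by auto
  have "\<delta> (g,h) z = 0 \<or> \<delta> (g+3,h) z = 0" using z(2) d1 delta_le3[of "(g+3,h)" z] delta_le3[of "(g,h)" z] by auto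
  thus ?thesis using z(1) delta_0 by auto
qed

lemma noanti2: "y \<in> V \<Longrightarrow> fst x = 2 \<Longrightarrow> \<not> anti x y"
  by (auto simp: anti_def inV)

lemma F3:
  assumes SR: "strong_resolving V E S" and h: "h < r" and k: "k < r" and hk: "h \<noteq> k" "\<not> EH h k"
  shows "(2,h) \<in> S \<or> (2,k) \<in> S"
proof -
  have xV: "(2,h) \<in> V" "(2,k) \<in> V" using h k by (auto simp: inV)
  have nkh: "\<not> EH k h" using hk sym by blast
  have d1: "\<delta> (2,h) (2,k) = 2" "\<delta> (2,k) (2,h) = 2" using hk nkh by (auto simp: \<delta>_def E_simp anti_def)
  obtain z where z: "z \<in> S" "\<delta> (2,k) z = \<delta> (2,k) (2,h) + \<delta> (2,h) z \<or> \<delta> (2,h) z = \<delta> (2,h) (2,k) + \<delta> (2,k) z"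
    using SR_delta[OF SR xV] hk by auto
  have zV: "z \<in> V" using z SR by (auto simp: strong_resolving_def)
  have "\<delta> (2,h) z \<le> 2" "\<delta> (2,k) z \<le> 2" using noanti2[OF zV] by (auto simp: \<delta>_def)
  hence "\<delta> (2,h) z = 0 \<or> \<delta> (2,k) z = 0" using z(2) d1 by auto
  thus ?thesis using z(1) delta_0 by auto
qed


lemma finV: "finite V" by (simp add: modprod_V_def path_V_def)

lemma cover_card:
  assumes fin: "finite A" and cov: "\<And>h. h < r \<Longrightarrow> \<exists>x\<in>A. snd x = h"
  shows "r \<le> card A"
proof -
  have "{0..<r} \<subseteq> snd ` A" using cov by force
  hence "card {0..<r} \<le> card (snd ` A)" using fin by (intro card_mono) auto
  also have "\<dots> \<le> card A" using fin by (rule card_image_le)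
  finally show ?thesis by simp
qed

lemma clique_le2:
  assumes D: "D \<subseteq> {0..<r}" and cl: "\<And>a b. a \<in> D \<Longrightarrow> b \<in> D \<Longrightarrow> a \<noteq> b \<Longrightarrow> EH a b"
  shows "card D \<le> 2"
proof (rule ccontr)
  assume "\<not> card D \<le> 2"
  hence c3: "Suc (Suc (Suc 0)) \<le> card D" by linarith
  obtain a B where B: "D = insert a B" "a \<notin> B" "Suc (Suc 0) \<le> card B" using card_le_Suc_iff[THEN iffD1, OF c3] by blast
  obtain b C where C: "B = insert b C" "b \<notin> C" "Suc 0 \<le> card C" using card_le_Suc_iff[THEN iffD1, OF B(3)] by blast
  obtain c C' where "C = insert c C'" "c \<notin> C'" using card_le_Suc_iff[THEN iffD1, OF C(3)] by blast
  hence abc: "a \<in> D" "b \<in> D" "c \<in> D" "a \<noteq> b" "a \<noteq> c" "b \<noteq> c" using B C by auto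
  have lt: "a < r" "b < r" "c < r" using abc D by auto
  have "EH a b" "EH b c" "EH a c" using cl abc by auto
  thus False using tri[OF lt] by blast
qed

lemma lower:
  assumes SR: "strong_resolving V E S"
  shows "3 * r - 2 \<le> card S"
proof -
  have SV: "S \<subseteq> V" using SR by (simp add: strong_resolving_def)
  have finS: "finite S" using SV finV finite_subset by blast
  define A where "A = S \<inter> ({0,3} \<times> UNIV)"
  define B where "B = S \<inter> ({1,4} \<times> UNIV)"
  define C where "C = S \<inter> ({2} \<times> UNIV)"
  have fA: "finite A" "finite B" "finite C" using finS by (auto simp: A_def B_def C_def)
  have cA: "r \<le> card A"
  proof (rule cover_card[OF fA(1)])
    fix h assume "h < r"
    from F1[OF SR _ this, of 0] show "\<exists>x\<in>A. snd x = h" unfolding A_def by force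
  qed
  have cB: "r \<le> card B"
  proof (rule cover_card[OF fA(2)])
    fix h assume "h < r"
    from F1[OF SR _ this, of 1] show "\<exists>x\<in>B. snd x = h" unfolding B_def by force
  qed
  define D where "D = {h. h < r \<and> (2,h) \<notin> S}"
  have cD: "card D \<le> 2"
  proof (rule clique_le2)
    show "D \<subseteq> {0..<r}" by (auto simp: D_def)
    fix a b assume "a \<in> D" "b \<in> D" "a \<noteq> b"
    thus "EH a b" using F3[OF SR, of a b] by (auto simp: D_def)
  qed
  have "{0..<r} \<subseteq> snd ` C \<union> D" by (force simp: C_def D_def)
  moreover have "finite (snd ` C \<union> D)" using fA(3) by (auto simp: D_def)
  ultimately have "card {0..<r} \<le> card (snd ` C \<union> D)" by (rule card_mono[rotated])
  hence "r \<le> card (snd ` C \<union> D)" by simp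
  also have "\<dots> \<le> card (snd ` C) + card D" by (rule card_Un_le)
  also have "\<dots> \<le> card C + 2" using cD card_image_le[OF fA(3), of snd] by linarith
  finally have cC: "r \<le> card C + 2" .
  have "A \<union> B \<union> C \<subseteq> S" by (auto simp: A_def B_def C_def)
  hence "card (A \<union> B \<union> C) \<le> card S" using finS by (rule card_mono[rotated])
  moreover have "card (A \<union> B \<union> C) = card A + card B + card C"
  proof -
    have d1: "A \<inter> B = {}" "(A \<union> B) \<inter> C = {}" by (auto simp: A_def B_def C_def)
    have "card (A \<union> B \<union> C) = card (A \<union> B) + card C" using fA d1(2) by (simp add: card_Un_disjoint)
    also have "card (A \<union> B) = card A + card B" using fA d1(1) by (simp add: card_Un_disjoint)
    finally show ?thesis .
  qed
  ultimately show ?thesis using cA cB cC by linarith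
qed


definition S0 :: "(nat \<times> nat) set" where
  "S0 = ({0,1} \<times> {0..<r}) \<union> ({2} \<times> {2..<r})"

lemma S0_card: "card S0 = 3 * r - 2"
proof -
  have "card S0 = card ({0,1::nat} \<times> {0..<r}) + card ({2::nat} \<times> {2..<r})"
    unfolding S0_def by (rule card_Un_disjoint) auto
  also have "\<dots> = 2 * r + (r - 2)" by (simp add: card_cartesian_product)
  finally show ?thesis using r7 by simp
qed

lemma S0_SR: "strong_resolving V E S0"
  unfolding strong_resolving_def
proof (intro conjI ballI impI)
  show "S0 \<subseteq> V" by (auto simp: S0_def inV)
  fix x y assume xV: "x \<in> V" and yV: "y \<in> V" and xy: "x \<noteq> y"
  have S0V: "S0 \<subseteq> V" by (auto simp: S0_def inV)
  have "\<exists>z\<in>S0. \<delta> y z = \<delta> y x + \<delta> x z \<or> \<delta> x z = \<delta> x y + \<delta> y z"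
  proof -
    obtain g h where x: "x = (g,h)" by (cases x)
    obtain g' k where y: "y = (g',k)" by (cases y)
    have g: "g < 5" "h < r" using xV x by (auto simp: inV)
    have g': "g' < 5" "k < r" using yV y by (auto simp: inV)
    show ?thesis
    proof (cases "x \<in> S0")
      case True thus ?thesis by (intro bexI[of _ x]) (auto simp: \<delta>_def)
    next
      case xS: False
      show ?thesis
      proof (cases "y \<in> S0")
        case True thus ?thesis by (intro bexI[of _ y]) (auto simp: \<delta>_def)
      next
        case yS: False
        show ?thesis
        proof (cases "g = 3 \<or> g = 4")
          case True
          have "(g-3,h) \<in> S0" using True g by (auto simp: S0_def)
          moreover have "\<delta> x (g-3,h) = \<delta> x y + \<delta> y (g-3,h)"
          proof -
            have "\<delta> x (g-3,h) = 3" using True x by (auto simp: \<delta>_def E_eq anti_def)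
            thus ?thesis using K[OF True g(2), of g' k] yV x y by simp
          qed
          ultimately show ?thesis by blast
        next
          case gx: False
          show ?thesis
          proof (cases "g' = 3 \<or> g' = 4")
            case True
            have "(g'-3,k) \<in> S0" using True g' by (auto simp: S0_def)
            moreover have "\<delta> y (g'-3,k) = \<delta> y x + \<delta> x (g'-3,k)"
            proof -
              have "\<delta> y (g'-3,k) = 3" using True y by (auto simp: \<delta>_def E_eq anti_def)
              thus ?thesis using K[OF True g'(2), of g h] xV x y by simp
            qed
            ultimately show ?thesis by blast
          next
            case gy: False
            have "g = 2 \<and> h < 2" using gx xS g x less5[of g] by (auto simp: S0_def)
            moreover have "g' = 2 \<and> k < 2" using gy yS g' y less5[of g'] by (auto simp: S0_def)
            ultimately have "(x = (2,0) \<and> y = (2,1)) \<or> (x = (2,1) \<and> y = (2,0))" using x y xy by auto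
            moreover have "(2,2) \<in> S0" using r7 by (auto simp: S0_def)
            moreover have "\<delta> (2,0) (2,2) = 2" "\<delta> (2,0) (2,1) = 1" "\<delta> (2,1) (2,2) = 1"
              "\<delta> (2,1) (2,0) = 1" "\<delta> (2,2) (2,1) = 1"
              using e01 e12 n02 sym[OF e01] sym[OF e12] by (auto simp: \<delta>_def E_simp anti_def)
            ultimately show ?thesis by (elim disjE) (rule bexI[of _ "(2,2)"]; simp)+
          qed
        qed
      qed
    qed
  qed
  then obtain z where z: "z \<in> S0" "\<delta> y z = \<delta> y x + \<delta> x z \<or> \<delta> x z = \<delta> x y + \<delta> y z" by blast
  have zV: "z \<in> V" using z(1) S0V by blast
  show "\<exists>z\<in>S0. gdist V E y z = gdist V E y x + gdist V E x z \<or> gdist V E x z = gdist V E x y + gdist V E y z"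
    using z by (intro bexI[of _ z]) (simp_all add: gdist_eq xV yV zV)
qed

lemma sdim_eq: "sdim V E = 3 * r - 2"
  unfolding sdim_def
proof (rule Least_equality)
  show "\<exists>S. strong_resolving V E S \<and> card S = 3 * r - 2" using S0_SR S0_card by blast
  fix k assume "\<exists>S. strong_resolving V E S \<and> card S = k"
  thus "3 * r - 2 \<le> k" using lower by blast
qed

end

lemma avoid6:
  assumes "(r::nat) \<ge> 7"
  shows "\<exists>c<r. c \<notin> {a1,a2,a3,a4,a5,a6}"
proof -
  have "card {a1,a2,a3,a4,a5,a6} \<le> 6"
    using card_length[of "[a1,a2,a3,a4,a5,a6]"] by simp
  hence "\<not> {0..<7::nat} \<subseteq> {a1,a2,a3,a4,a5,a6}"
    using card_mono[of "{a1,a2,a3,a4,a5,a6}" "{0..<7::nat}"] by auto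
  then obtain c where c: "c \<in> {0..<7::nat}" "c \<notin> {a1,a2,a3,a4,a5,a6}" by blast
  have "c < r" using c(1) assms by simp
  thus ?thesis using c(2) by blast
qed

lemma HG_path: "r \<ge> 7 \<Longrightarrow> HG r path_E"
proof
  assume r7: "r \<ge> 7"
  show "r \<ge> 7" by fact
  show "\<And>a b. path_E a b \<Longrightarrow> path_E b a" by (auto simp: path_E_def)
  show "\<And>a. \<not> path_E a a" by (auto simp: path_E_def)
  show "\<And>a b c. a < r \<Longrightarrow> b < r \<Longrightarrow> c < r \<Longrightarrow> path_E a b \<Longrightarrow> path_E b c \<Longrightarrow> path_E a c \<Longrightarrow> False"
    by (auto simp: path_E_def)
  show "\<exists>c<r. c \<noteq> h \<and> c \<noteq> h' \<and> \<not> path_E h c \<and> \<not> path_E h' c" if "h < r" "h' < r" for h h'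
  proof -
    obtain c where "c < r" "c \<notin> {h, h+1, h-1, h', h'+1, h'-1}" using avoid6[OF r7] by blast
    thus ?thesis by (intro exI[of _ c]) (auto simp: path_E_def)
  qed
  show "\<exists>a<r. path_E h a" if "h < r" for h
  proof (cases "h + 1 < r")
    case True thus ?thesis by (intro exI[of _ "h+1"]) (simp add: path_E_def)
  next
    case False thus ?thesis using that r7 by (intro exI[of _ "h-1"]) (auto simp: path_E_def)
  qed
  show "(\<exists>c<r. path_E h c \<and> c \<noteq> h') \<or> (\<exists>c<r. path_E h' c \<and> c \<noteq> h)"
    if "h < r" "h' < r" "path_E h h'" for h h'
  proof (cases "h = 0 \<or> h' = 0")
    case True
    hence "(h = 0 \<and> h' = 1) \<or> (h = 1 \<and> h' = 0)" using that by (auto simp: path_E_def)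
    moreover have "2 < r" "path_E 1 2" "(2::nat) \<noteq> 0" using r7 by (auto simp: path_E_def)
    ultimately show ?thesis by blast
  next
    case False
    show ?thesis
    proof (cases "h' = h + 1")
      case True thus ?thesis using that False by (intro disjI1 exI[of _ "h-1"]) (auto simp: path_E_def)
    next
      case nt: False thus ?thesis using that False by (intro disjI2 exI[of _ "h'-1"]) (auto simp: path_E_def)
    qed
  qed
  show "path_E 0 1" "path_E 1 2" "\<not> path_E 0 2" by (auto simp: path_E_def)
qed

lemma cyc: "i < r \<Longrightarrow> j < r \<Longrightarrow> cycle_E r i j \<longleftrightarrow>
   i \<noteq> j \<and> (j = i + 1 \<or> (i + 1 = r \<and> j = 0) \<or> i = j + 1 \<or> (j + 1 = r \<and> i = 0))"
proof -
  assume "i < r" "j < r"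
  hence m: "(i+1) mod r = (if i + 1 = r then 0 else i+1)" "(j+1) mod r = (if j + 1 = r then 0 else j+1)"
    by auto
  show ?thesis unfolding cycle_E_def m using \<open>i < r\<close> \<open>j < r\<close> by auto
qed

lemma HG_cycle: "r \<ge> 7 \<Longrightarrow> HG r (cycle_E r)"
proof
  assume r7: "r \<ge> 7"
  show "r \<ge> 7" by fact
  show "\<And>a b. cycle_E r a b \<Longrightarrow> cycle_E r b a" by (auto simp: cycle_E_def)
  show "\<And>a. \<not> cycle_E r a a" by (auto simp: cycle_E_def)
  show "\<And>a b c. a < r \<Longrightarrow> b < r \<Longrightarrow> c < r \<Longrightarrow> cycle_E r a b \<Longrightarrow> cycle_E r b c \<Longrightarrow> cycle_E r a c \<Longrightarrow> False"
    using r7 by (simp add: cyc) arith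
  show "\<exists>c<r. c \<noteq> h \<and> c \<noteq> h' \<and> \<not> cycle_E r h c \<and> \<not> cycle_E r h' c" if "h < r" "h' < r" for h h'
  proof -
    define na where "na x = (if x + 1 = r then 0 else x + 1)" for x
    define nb where "nb x = (if x = 0 then r - 1 else x - 1)" for x
    obtain c where c: "c < r" "c \<notin> {h, na h, nb h, h', na h', nb h'}" using avoid6[OF r7] by blast
    have "\<not> cycle_E r h c" "\<not> cycle_E r h' c" using c that by (auto simp: cyc na_def nb_def split: if_splits)
    thus ?thesis using c by auto
  qed
  show "\<exists>a<r. cycle_E r h a" if "h < r" for h
  proof (cases "h + 1 < r")
    case True thus ?thesis using that by (intro exI[of _ "h+1"]) (simp add: cyc)
  next
    case False thus ?thesis using that r7 by (intro exI[of _ "h-1"]) (auto simp: cyc)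
  qed
  show "(\<exists>c<r. cycle_E r h c \<and> c \<noteq> h') \<or> (\<exists>c<r. cycle_E r h' c \<and> c \<noteq> h)"
    if "h < r" "h' < r" "cycle_E r h h'" for h h'
  proof -
    define na where "na = (if h + 1 = r then 0 else h + 1)"
    define nb where "nb = (if h = 0 then r - 1 else h - 1)"
    have "na < r" "nb < r" "cycle_E r h na" "cycle_E r h nb" "na \<noteq> nb"
      using that r7 by (auto simp: cyc na_def nb_def)
    thus ?thesis by (cases "na = h'") auto
  qed
  show "cycle_E r 0 1" "cycle_E r 1 2" "\<not> cycle_E r 0 2" using r7 by (auto simp: cycle_E_def)
qed

theorem mainTheorem16:
  fixes r :: nat
  assumes "r \<ge> 7"
  shows "sdim (modprod_V (path_V 5) (path_V r)) (modprod_E path_E path_E) = 3 * r - 2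
       \<and> sdim (modprod_V (path_V 5) (cycle_V r)) (modprod_E path_E (cycle_E r)) = 3 * r - 2"
  using HG.sdim_eq[OF HG_path[OF assms]] HG.sdim_eq[OF HG_cycle[OF assms]]
  by (simp add: path_V_def cycle_V_def)

end
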